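(* Let $a,b,c$ be positive numbers with $a<b<c$. Then $\mathcal D_{a,b,c}=\emptyset$ if and only if $Q_{a,b,c}<+\infty$.
   Context: For $a,b,c>0$ and $t\in\mathbb R$, $\mathbf M_{a,b,c}(t)=(\chi_{[0,c)}(t-\mu+\lambda))_{\mu\in a\mathbb Z,\lambda\in b\mathbb Z}$ is the infinite matrix with rows indexed by $a\mathbb Z$ and columns by $b\mathbb Z$, acting by $(\mathbf M_{a,b,c}(t)\mathbf x)(\mu)=\sum_{\lambda\in b\mathbb Z}\chi_{[0,c)}(t-\mu+\lambda)\mathbf x(\lambda)$. $\mathcal B_b$ is the set of vectors $(\mathbf x(\lambda))_{\lambda\in b\mathbb Z}$ with entries in $\{0,1\}$, and $\mathcal B_b^0=\{\mathbf x\in\mathcal B_b:\mathbf x(0)=1\}$. $\mathbf 2$ denotes the vector indexed by $a\mathbb Z$ all of whose entries are $2$. $\mathcal D_{a,b,c}=\{t\in\mathbb R:\mathbf M_{a,b,c}(t)\mathbf x=\mathbf 2\text{ for some }\mathbf x\in\mathcal B_b^0\}$. For $t\in\mathbb R$ and $\mathbf x\in\mathcal B_b$, let $K(t,\mathbf x)=\{\mu\in a\mathbb Z:(\mathbf M_{a,b,c}(t)\mathbf x)(\mu)=2\}$, let $Q_{a,b,c}(t,\mathbf x)=0$ if $K(t,\mathbf x)=\emptyset$ and otherwise $Q_{a,b,c}(t,\mathbf x)=\sup\{n\in\mathbb N:[\mu,\mu+na)\cap a\mathbb Z\subset K(t,\mathbf x)\text{ for some }\mu\in a\mathbb Z\}$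 (the maximal length of a run of consecutive entries equal to $2$), and $Q_{a,b,c}=\sup_{t\in\mathbb R}\sup_{\mathbf x\in\mathcal B_b}Q_{a,b,c}(t,\mathbf x)\in[0,+\infty]$. *)

theory Defs
  imports "HOL-Analysis.Analysis" "HOL-Library.Extended_Nat"
begin

text \<open>Rows are indexed by a*m (m :: int), columns by b*n (n :: int).
  A vector x indexed by bZ is a function int => real (x n is the entry at b*n).\<close>

definition Mmul :: "real \<Rightarrow> real \<Rightarrow> real \<Rightarrow> real \<Rightarrow> (int \<Rightarrow> real) \<Rightarrow> int \<Rightarrow> real" where
  "Mmul a b c t x m = infsum (\<lambda>n::int. indicator {0..<c} (t - a * of_int m + b * of_int n) * x n) UNIV"

definition Bvec :: "(int \<Rightarrow> real) set" where
  "Bvec = {x. \<forall>n. x n \<in> {0, 1}}"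

definition Bvec0 :: "(int \<Rightarrow> real) set" where
  "Bvec0 = {x \<in> Bvec. x 0 = 1}"

definition Dset :: "real \<Rightarrow> real \<Rightarrow> real \<Rightarrow> real set" where
  "Dset a b c = {t. \<exists>x \<in> Bvec0. \<forall>m. Mmul a b c t x m = 2}"

definition Kset :: "real \<Rightarrow> real \<Rightarrow> real \<Rightarrow> real \<Rightarrow> (int \<Rightarrow> real) \<Rightarrow> int set" where
  "Kset a b c t x = {m. Mmul a b c t x m = 2}"

definition Qtx :: "real \<Rightarrow> real \<Rightarrow> real \<Rightarrow> real \<Rightarrow> (int \<Rightarrow> real) \<Rightarrow> enat" where
  "Qtx a b c t x = (if Kset a b c t x = {} then 0
     else Sup {enat n | n. n \<ge> 1 \<and> (\<exists>m. {m..<m + int n} \<subseteq> Kset a b c t x)})"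

definition Q :: "real \<Rightarrow> real \<Rightarrow> real \<Rightarrow> enat" where
  "Q a b c = (SUP t \<in> UNIV. SUP x \<in> Bvec. Qtx a b c t x)"

end

theory Submission imports Defs begin

definition Wr :: "real \<Rightarrow> real \<Rightarrow> real \<Rightarrow> real \<Rightarrow> (int \<Rightarrow> real) \<Rightarrow> int \<Rightarrow> int set" where
  "Wr a b c t x m = {n. x n = 1 \<and> 0 \<le> t - a * of_int m + b * of_int n \<and> t - a * of_int m + b * of_int n < c}"
definition Wl :: "real \<Rightarrow> real \<Rightarrow> real \<Rightarrow> real \<Rightarrow> (int \<Rightarrow> real) \<Rightarrow> int \<Rightarrow> int set" where
  "Wl a b c t x m = {n. x n = 1 \<and> 0 < t - a * of_int m + b * of_int n \<and> t - a * of_int m + b * of_int n \<le> c}"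

lemma finite_band:
  fixes b lo hi :: real assumes "b > 0"
  shows "finite {n::int. lo \<le> b * of_int n \<and> b * of_int n \<le> hi}"
proof -
  have "{n::int. lo \<le> b * of_int n \<and> b * of_int n \<le> hi} \<subseteq> {\<lfloor>lo / b\<rfloor> .. \<lceil>hi / b\<rceil>}"
  proof
    fix n :: int assume "n \<in> {n::int. lo \<le> b * of_int n \<and> b * of_int n \<le> hi}"
    then have "lo / b \<le> of_int n" "of_int n \<le> hi / b" using assms
      by (auto simp: field_simps mult.commute)
    then show "n \<in> {\<lfloor>lo / b\<rfloor> .. \<lceil>hi / b\<rceil>}"
      by (auto simp: floor_le_iff le_ceiling_iff)
  qed
  then show ?thesis by (rule finite_subset) simp
qed

lemma finite_Wr: assumes "b > 0" shows "finite (Wr a b c t x m)"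
proof -
  have "Wr a b c t x m \<subseteq> {n::int. a * of_int m - t \<le> b * of_int n \<and> b * of_int n \<le> a * of_int m - t + c}"
    unfolding Wr_def by auto
  then show ?thesis using finite_band[OF assms] finite_subset by blast
qed

lemma Mmul_card:
  assumes "b > 0" "x \<in> Bvec"
  shows "Mmul a b c t x m = real (card (Wr a b c t x m))"
proof -
  let ?g = "\<lambda>n::int. indicator {0..<c} (t - a * of_int m + b * of_int n) * x n :: real"
  have g: "?g n = (if n \<in> Wr a b c t x m then 1 else 0)" for n
    using assms(2) unfolding Wr_def Bvec_def indicator_def
    by (cases "x n = 0") auto
  have "Mmul a b c t x m = infsum ?g (Wr a b c t x m)"
    unfolding Mmul_def by (rule infsum_cong_neutral) (auto simp: g)
  also have "\<dots> = sum ?g (Wr a b c t x m)" using finite_Wr[OF assms(1)] by simp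
  also have "\<dots> = real (card (Wr a b c t x m))" by (simp add: g)
  finally show ?thesis .
qed

lemma Wr_shift:
  "Wr a b c (t - a * of_int k + b * of_int j) (\<lambda>n. x (n + j)) m = (\<lambda>n. n - j) ` Wr a b c t x (m + k)"
proof -
  have "Wr a b c (t - a * of_int k + b * of_int j) (\<lambda>n. x (n + j)) m = {n. n + j \<in> Wr a b c t x (m + k)}"
    unfolding Wr_def by (auto simp: algebra_simps)
  also have "\<dots> = (\<lambda>n. n - j) ` Wr a b c t x (m + k)"
    by (auto simp: image_iff) (metis add_diff_cancel)
  finally show ?thesis .
qed

lemma card_Wr_shift:
  "card (Wr a b c (t - a * of_int k + b * of_int j) (\<lambda>n. x (n + j)) m) = card (Wr a b c t x (m + k))"
  unfolding Wr_shift by (rule card_image) (auto simp: inj_on_def)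

lemma Wr_reflect:
  "Wr a b c (c - t) (\<lambda>n. x (- n)) m = uminus ` Wl a b c t x (- m)"
proof -
  have "Wr a b c (c - t) (\<lambda>n. x (- n)) m = {n. - n \<in> Wl a b c t x (- m)}"
    unfolding Wr_def Wl_def by (auto simp: algebra_simps)
  also have "\<dots> = uminus ` Wl a b c t x (- m)"
    by (auto simp: image_iff) (metis minus_minus)
  finally show ?thesis .
qed

lemma card_Wr_reflect:
  "card (Wr a b c (c - t) (\<lambda>n. x (- n)) m) = card (Wl a b c t x (- m))"
  unfolding Wr_reflect by (rule card_image) (auto simp: inj_on_def)

lemma ev_right:
  fixes u :: "nat \<Rightarrow> real"
  assumes "u \<longlonglongrightarrow> \<alpha>"
  shows "eventually (\<lambda>k. \<alpha> \<le> u k \<longrightarrow> ((0 \<le> u k \<and> u k < c) \<longleftrightarrow> (0 \<le> \<alpha> \<and> \<alpha> < c))) sequentially"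
proof (cases "\<alpha> < 0")
  case True
  then have "eventually (\<lambda>k. u k < 0) sequentially" using assms order_tendstoD(2) by blast
  then show ?thesis by eventually_elim (use True in auto)
next
  case F: False
  show ?thesis
  proof (cases "\<alpha> < c")
    case True
    then have "eventually (\<lambda>k. u k < c) sequentially" using assms order_tendstoD(2) by blast
    then show ?thesis by eventually_elim (use True F in auto)
  next
    case False
    then show ?thesis by auto
  qed
qed

lemma ev_left:
  fixes u :: "nat \<Rightarrow> real"
  assumes "u \<longlonglongrightarrow> \<alpha>"
  shows "eventually (\<lambda>k. u k < \<alpha> \<longrightarrow> ((0 \<le> u k \<and> u k < c) \<longleftrightarrow> (0 < \<alpha> \<and> \<alpha> \<le> c))) sequentially"
proof (cases "c < \<alpha>")
  case True
  then have "eventually (\<lambda>k. c < u k) sequentially" using assms order_tendstoD(1) by blast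
  then show ?thesis by eventually_elim (use True in auto)
next
  case F: False
  show ?thesis
  proof (cases "0 < \<alpha>")
    case True
    then have "eventually (\<lambda>k. 0 < u k) sequentially" using assms order_tendstoD(1) by blast
    then show ?thesis by eventually_elim (use True F in auto)
  next
    case False
    then show ?thesis by auto
  qed
qed

lemma compact_Bvec: "compact Bvec"
proof -
  have "Bvec = PiE UNIV (\<lambda>_. {0, 1::real})"
    unfolding Bvec_def by (auto simp: PiE_def extensional_def)
  moreover have "compactin (product_topology (\<lambda>_. euclidean) UNIV) (PiE (UNIV::int set) (\<lambda>_. {0, 1::real}))"
    by (subst compactin_PiE) auto
  ultimately show ?thesis
    by (simp add: euclidean_product_topology)
qed

lemma eq_eventually01:
  fixes f :: "nat \<Rightarrow> real"
  assumes "f \<longlonglongrightarrow> l" "\<And>k. f k \<in> {0,1}" "l \<in> {0,1}"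
  shows "eventually (\<lambda>k. f k = l) sequentially"
proof -
  have "eventually (\<lambda>k. dist (f k) l < 1/2) sequentially"
    using assms(1) by (rule tendstoD) simp
  then show ?thesis
  proof eventually_elim
    case (elim k)
    then show ?case using assms(2)[of k] assms(3) by (auto simp: dist_real_def)
  qed
qed

lemma limit_step:
  fixes a b c :: real
  assumes b: "b > 0" and c: "c > 0"
    and T: "\<And>k. T k \<in> {0..<c}" and X: "\<And>k. X k \<in> Bvec" and X0: "\<And>k. X k 0 = 1"
    and run: "\<And>k i. \<bar>i\<bar> \<le> int k \<Longrightarrow> card (Wr a b c (T k) (X k) i) = 2"
  shows "\<exists>t y. y \<in> Bvec0 \<and> (\<forall>m. card (Wr a b c t y m) = 2)"
proof -
  let ?S = "{0..c} \<times> Bvec"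
  have "compact ?S" by (intro compact_Times compact_Icc compact_Bvec)
  then have "seq_compact ?S" by (rule compact_imp_seq_compact)
  moreover have "\<forall>k. (\<lambda>k. (T k, X k)) k \<in> ?S" using T X by (auto simp: less_imp_le)
  ultimately obtain l r where l: "l \<in> ?S" and r: "strict_mono r"
    and lim: "((\<lambda>k. (T k, X k)) \<circ> r) \<longlonglongrightarrow> l"
    by (rule seq_compactE)
  obtain t x where l_eq: "l = (t, x)" by (cases l)
  have t: "0 \<le> t" "t \<le> c" and x: "x \<in> Bvec" using l l_eq by auto
  have limt: "(\<lambda>k. T (r k)) \<longlonglongrightarrow> t"
    using tendsto_fst[OF lim] l_eq by (simp add: o_def)
  have limX: "(\<lambda>k. X (r k)) \<longlonglongrightarrow> x"
    using tendsto_snd[OF lim] l_eq by (simp add: o_def)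
  have limXn: "(\<lambda>k. X (r k) n) \<longlonglongrightarrow> x n" for n
    using continuous_on_tendsto_compose[OF continuous_on_product_coordinates limX]
    by (simp add: o_def)
  have evX: "eventually (\<lambda>k. X (r k) n = x n) sequentially" for n
    by (rule eq_eventually01[OF limXn]) (use X x in \<open>auto simp: Bvec_def\<close>)
  have x0: "x 0 = 1"
  proof -
    obtain k where "X (r k) 0 = x 0" using eventually_happens'[OF _ evX[of 0]] by auto
    then show ?thesis using X0 by simp
  qed
  define F where "F m = {n::int. a * of_int m - c \<le> b * of_int n \<and> b * of_int n \<le> a * of_int m + c}" for m
  have finF: "finite (F m)" for m unfolding F_def by (rule finite_band[OF b])
  have WrF: "Wr a b c s y m \<subseteq> F m" if "0 \<le> s" "s \<le> c" for s y m
    using that unfolding Wr_def F_def by auto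
  have WlF: "Wl a b c s y m \<subseteq> F m" if "0 \<le> s" "s \<le> c" for s y m
    using that unfolding Wl_def F_def by auto
  define P where "P m k \<longleftrightarrow> (\<forall>n\<in>F m. X (r k) n = x n) \<and>
      (\<forall>n\<in>F m. t \<le> T (r k) \<longrightarrow> ((0 \<le> T (r k) - a * of_int m + b * of_int n \<and> T (r k) - a * of_int m + b * of_int n < c)
          \<longleftrightarrow> (0 \<le> t - a * of_int m + b * of_int n \<and> t - a * of_int m + b * of_int n < c))) \<and>
      (\<forall>n\<in>F m. T (r k) < t \<longrightarrow> ((0 \<le> T (r k) - a * of_int m + b * of_int n \<and> T (r k) - a * of_int m + b * of_int n < c)
          \<longleftrightarrow> (0 < t - a * of_int m + b * of_int n \<and> t - a * of_int m + b * of_int n \<le> c))) \<and>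
      \<bar>m\<bar> \<le> int (r k)" for m k
  have evP: "eventually (P m) sequentially" for m
  proof -
    have lim': "(\<lambda>k. T (r k) - a * of_int m + b * of_int n) \<longlonglongrightarrow> t - a * of_int m + b * of_int n" for n
      by (intro tendsto_intros limt)
    have e1: "eventually (\<lambda>k. \<forall>n\<in>F m. X (r k) n = x n) sequentially"
      using finF evX by (simp add: eventually_ball_finite)
    have e2: "eventually (\<lambda>k. \<forall>n\<in>F m. t \<le> T (r k) \<longrightarrow> ((0 \<le> T (r k) - a * of_int m + b * of_int n \<and> T (r k) - a * of_int m + b * of_int n < c)
          \<longleftrightarrow> (0 \<le> t - a * of_int m + b * of_int n \<and> t - a * of_int m + b * of_int n < c))) sequentially"
      by (rule eventually_ball_finite[OF finF], rule ballI) (use ev_right[OF lim', of _ c] in simp)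
    have e3: "eventually (\<lambda>k. \<forall>n\<in>F m. T (r k) < t \<longrightarrow> ((0 \<le> T (r k) - a * of_int m + b * of_int n \<and> T (r k) - a * of_int m + b * of_int n < c)
          \<longleftrightarrow> (0 < t - a * of_int m + b * of_int n \<and> t - a * of_int m + b * of_int n \<le> c))) sequentially"
      by (rule eventually_ball_finite[OF finF], rule ballI) (use ev_left[OF lim', of _ c] in simp)
    have e4: "eventually (\<lambda>k. \<bar>m\<bar> \<le> int (r k)) sequentially"
    proof (rule eventually_sequentiallyI[of "nat \<bar>m\<bar>"])
      fix k assume "nat \<bar>m\<bar> \<le> k"
      moreover have "k \<le> r k" using r by (rule seq_suble)
      ultimately show "\<bar>m\<bar> \<le> int (r k)" by linarith
    qed
    show ?thesis using e1 e2 e3 e4 unfolding P_def by eventually_elim blast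
  qed
  have pick: "\<exists>k\<in>A. P m k" if infA: "infinite A" for A m
  proof -
    obtain K0 where "\<And>k. k \<ge> K0 \<Longrightarrow> P m k" using evP[of m] by (auto simp: eventually_sequentially)
    moreover obtain k where "k \<in> A" "k \<ge> K0" using infA unfolding infinite_nat_iff_unbounded_le by blast
    ultimately show ?thesis by blast
  qed
  show ?thesis
  proof (cases "infinite {k. t \<le> T (r k)}")
    case True
    have "card (Wr a b c t x m) = 2" for m
    proof -
      obtain k where k: "t \<le> T (r k)" "P m k" using pick[OF True, of m] by auto
      have "Wr a b c (T (r k)) (X (r k)) m = Wr a b c t x m"
      proof -
        have A: "Wr a b c (T (r k)) (X (r k)) m \<subseteq> F m" using T[of "r k"] WrF by (meson atLeastLessThan_iff less_imp_le)
        have B: "Wr a b c t x m \<subseteq> F m" using t by (intro WrF) auto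
        have "n \<in> Wr a b c (T (r k)) (X (r k)) m \<longleftrightarrow> n \<in> Wr a b c t x m" if "n \<in> F m" for n
          using k that unfolding P_def Wr_def by auto
        then show ?thesis using A B by blast
      qed
      moreover have "card (Wr a b c (T (r k)) (X (r k)) m) = 2"
        using run k(2) unfolding P_def by blast
      ultimately show ?thesis by simp
    qed
    then show ?thesis using x x0 unfolding Bvec0_def by blast
  next
    case False
    have "{k. T (r k) < t} = UNIV - {k. t \<le> T (r k)}" by auto
    then have inf: "infinite {k. T (r k) < t}" using False by (metis finite_Diff2 infinite_UNIV_nat)
    have "card (Wl a b c t x m) = 2" for m
    proof -
      obtain k where k: "T (r k) < t" "P m k" using pick[OF inf, of m] by auto
      have "Wr a b c (T (r k)) (X (r k)) m = Wl a b c t x m"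
      proof -
        have A: "Wr a b c (T (r k)) (X (r k)) m \<subseteq> F m" using T[of "r k"] WrF by (meson atLeastLessThan_iff less_imp_le)
        have B: "Wl a b c t x m \<subseteq> F m" using t by (intro WlF) auto
        have "n \<in> Wr a b c (T (r k)) (X (r k)) m \<longleftrightarrow> n \<in> Wl a b c t x m" if "n \<in> F m" for n
          using k that unfolding P_def Wr_def Wl_def by auto
        then show ?thesis using A B by blast
      qed
      moreover have "card (Wr a b c (T (r k)) (X (r k)) m) = 2"
        using run k(2) unfolding P_def by blast
      ultimately show ?thesis by simp
    qed
    then have "card (Wr a b c (c - t) (\<lambda>n. x (- n)) m) = 2" for m
      by (simp add: card_Wr_reflect)
    moreover have "(\<lambda>n. x (- n)) \<in> Bvec0" using x x0 unfolding Bvec0_def Bvec_def by auto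
    ultimately show ?thesis by blast
  qed
qed

lemma runs:
  fixes a b c :: real
  assumes b: "b > 0" and Qinf: "\<not> Q a b c < \<infinity>"
  shows "\<exists>T X. T \<in> {0..<c} \<and> X \<in> Bvec \<and> X 0 = 1 \<and> (\<forall>i. \<bar>i\<bar> \<le> int k \<longrightarrow> card (Wr a b c T X i) = 2)"
proof -
  have "enat (2 * k + 1) < Q a b c" using Qinf by (simp add: not_less)
  then obtain t x where x: "x \<in> Bvec" and lt: "enat (2 * k + 1) < Qtx a b c t x"
    unfolding Q_def by (auto simp: less_SUP_iff)
  have Kne: "Kset a b c t x \<noteq> {}" using lt unfolding Qtx_def by (auto split: if_splits)
  then have "enat (2 * k + 1) < Sup {enat n | n. n \<ge> 1 \<and> (\<exists>m. {m..<m + int n} \<subseteq> Kset a b c t x)}"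
    using lt unfolding Qtx_def by simp
  then obtain n m where n: "2 * k + 1 < n" and sub: "{m..<m + int n} \<subseteq> Kset a b c t x"
    by (auto simp: less_Sup_iff)
  define m0 where "m0 = m + int k"
  have row: "card (Wr a b c t x (i + m0)) = 2" if "\<bar>i\<bar> \<le> int k" for i
  proof -
    have "i + m0 \<in> {m..<m + int n}" using that n unfolding m0_def by auto
    then have "Mmul a b c t x (i + m0) = 2" using sub unfolding Kset_def by auto
    then show ?thesis using Mmul_card[OF b x] by simp
  qed
  have "card (Wr a b c t x m0) = 2" using row[of 0] by simp
  then obtain n0 where n0: "n0 \<in> Wr a b c t x m0" by (metis card.empty ex_in_conv zero_neq_numeral)
  define T where "T = t - a * of_int m0 + b * of_int n0"
  define X where "X = (\<lambda>n. x (n + n0))"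
  have "T \<in> {0..<c}" "X 0 = 1" using n0 unfolding T_def X_def Wr_def by auto
  moreover have "X \<in> Bvec" using x unfolding X_def Bvec_def by auto
  moreover have "card (Wr a b c T X i) = 2" if "\<bar>i\<bar> \<le> int k" for i
    unfolding T_def X_def card_Wr_shift using row[OF that] .
  ultimately show ?thesis by blast
qed

lemma Qtx_inf:
  assumes "\<forall>m. Mmul a b c t x m = 2"
  shows "Qtx a b c t x = \<infinity>"
proof -
  have K: "Kset a b c t x = UNIV" using assms unfolding Kset_def by auto
  have A: "{enat n | n. n \<ge> 1 \<and> (\<exists>m. {m..<m + int n} \<subseteq> Kset a b c t x)} = enat ` {n. n \<ge> 1}"
    unfolding K by auto
  have "infinite {n::nat. n \<ge> 1}"
    by (metis infinite_Ici atLeast_def)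
  then have "infinite (enat ` {n. n \<ge> 1})"
    using finite_imageD[of enat "{n. n \<ge> 1}"] by (auto simp: inj_on_def)
  then show ?thesis unfolding Qtx_def A Sup_enat_def using K by auto
qed

theorem lemma3p4:
  fixes a b c :: real
  assumes "0 < a" "a < b" "b < c"
  shows "Dset a b c = {} \<longleftrightarrow> Q a b c < \<infinity>"
proof
  assume D: "Dset a b c = {}"
  show "Q a b c < \<infinity>"
  proof (rule ccontr)
    assume Qinf: "\<not> Q a b c < \<infinity>"
    have b: "b > 0" and c: "c > 0" using assms by auto
    have hex: "\<forall>k. \<exists>TX. fst TX \<in> {0..<c} \<and> snd TX \<in> Bvec \<and> snd TX 0 = 1 \<and>
        (\<forall>i. \<bar>i\<bar> \<le> int k \<longrightarrow> card (Wr a b c (fst TX) (snd TX) i) = 2)"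
    proof
      fix k
      obtain T X where "T \<in> {0..<c} \<and> X \<in> Bvec \<and> X 0 = 1 \<and> (\<forall>i. \<bar>i\<bar> \<le> int k \<longrightarrow> card (Wr a b c T X i) = 2)"
        using runs[OF b Qinf, of k] by blast
      then show "\<exists>TX. fst TX \<in> {0..<c} \<and> snd TX \<in> Bvec \<and> snd TX 0 = 1 \<and>
        (\<forall>i. \<bar>i\<bar> \<le> int k \<longrightarrow> card (Wr a b c (fst TX) (snd TX) i) = 2)"
        by (intro exI[of _ "(T, X)"]) simp
    qed
    obtain TX where TX: "\<And>k. fst (TX k) \<in> {0..<c} \<and> snd (TX k) \<in> Bvec \<and> snd (TX k) 0 = 1 \<and>
        (\<forall>i. \<bar>i\<bar> \<le> int k \<longrightarrow> card (Wr a b c (fst (TX k)) (snd (TX k)) i) = 2)"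
      using choice[OF hex] by blast
    obtain t y where y: "y \<in> Bvec0" and cy: "\<forall>m. card (Wr a b c t y m) = 2"
    proof -
      have "\<exists>t y. y \<in> Bvec0 \<and> (\<forall>m. card (Wr a b c t y m) = 2)"
        by (rule limit_step[OF b c, of "\<lambda>k. fst (TX k)" "\<lambda>k. snd (TX k)"]) (use TX in auto)
      then show ?thesis using that by blast
    qed
    have "y \<in> Bvec" using y unfolding Bvec0_def by auto
    then have "\<forall>m. Mmul a b c t y m = 2" using cy Mmul_card[OF b] by simp
    then have "t \<in> Dset a b c" using y unfolding Dset_def by blast
    then show False using D by auto
  qed
next
  assume Q: "Q a b c < \<infinity>"
  show "Dset a b c = {}"
  proof (rule ccontr)
    assume "Dset a b c \<noteq> {}"
    then obtain t x where x: "x \<in> Bvec0" and M: "\<forall>m. Mmul a b c t x m = 2"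
      unfolding Dset_def by auto
    have "x \<in> Bvec" using x unfolding Bvec0_def by auto
    then have "Qtx a b c t x \<le> Q a b c"
    proof -
      have "Qtx a b c t x \<le> (SUP x\<in>Bvec. Qtx a b c t x)" using \<open>x \<in> Bvec\<close> by (rule SUP_upper)
      also have "\<dots> \<le> (SUP t\<in>UNIV. SUP x\<in>Bvec. Qtx a b c t x)" by (rule SUP_upper) simp
      finally show ?thesis unfolding Q_def .
    qed
    then show False using Qtx_inf[OF M] Q by simp
  qed
qed

end
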